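(* Let $R$ be a commutative ring. Then $R$ is $\pi$-regular if and only if $R$ is feckly clean and every prime ideal of $R$ is maximal.
   Context: Rings have identity; $J(R)$ is the Jacobson radical. A ring $R$ is $\pi$-regular if for every $a\in R$ there is $n\in\mathbb{N}$ with $a^n\in a^nRa^n$. An element $u\in R$ is full if $RuR=R$. An element $a\in R$ is feckly clean if there exist $e\in R$ and a full element $u\in R$ with $a=e+u$ and $eR(1-e)\subseteq J(R)$; $R$ is feckly clean if every element is feckly clean. *)

theory Defs
  imports "HOL-Algebra.Algebra"
begin

text \<open>Jacobson radical: intersection of all maximal ideals (intersected with the carrier,
  so that it is the whole ring when there are no maximal ideals, i.e. the zero ring).\<close>
definition jacobson_radical :: "('a, 'b) ring_scheme \<Rightarrow> 'a set" where
  "jacobson_radical R = carrier R \<inter> \<Inter>{I. maximalideal I R}"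

definition pi_regular :: "('a, 'b) ring_scheme \<Rightarrow> bool" where
  "pi_regular R \<longleftrightarrow> (\<forall>a \<in> carrier R. \<exists>n::nat. n \<ge> 1 \<and>
      (\<exists>r \<in> carrier R. a [^]\<^bsub>R\<^esub> n = (a [^]\<^bsub>R\<^esub> n) \<otimes>\<^bsub>R\<^esub> r \<otimes>\<^bsub>R\<^esub> (a [^]\<^bsub>R\<^esub> n)))"

text \<open>u is full if RuR = R, i.e. the two-sided ideal generated by u is the whole ring.\<close>
definition full_elem :: "('a, 'b) ring_scheme \<Rightarrow> 'a \<Rightarrow> bool" where
  "full_elem R u \<longleftrightarrow> u \<in> carrier R \<and> genideal R {u} = carrier R"

definition feckly_clean_elem :: "('a, 'b) ring_scheme \<Rightarrow> 'a \<Rightarrow> bool" where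
  "feckly_clean_elem R a \<longleftrightarrow> (\<exists>e \<in> carrier R. \<exists>u \<in> carrier R.
      full_elem R u \<and> a = e \<oplus>\<^bsub>R\<^esub> u \<and>
      (\<forall>r \<in> carrier R. e \<otimes>\<^bsub>R\<^esub> r \<otimes>\<^bsub>R\<^esub> (\<one>\<^bsub>R\<^esub> \<ominus>\<^bsub>R\<^esub> e) \<in> jacobson_radical R))"

definition feckly_clean :: "('a, 'b) ring_scheme \<Rightarrow> bool" where
  "feckly_clean R \<longleftrightarrow> (\<forall>a \<in> carrier R. feckly_clean_elem R a)"

end

theory Submission imports Defs begin

lemma (in cring) chain_union_ideal:
  assumes C: "C \<noteq> {}" "\<And>J. J \<in> C \<Longrightarrow> ideal J R"
    and ch: "\<And>J K. J \<in> C \<Longrightarrow> K \<in> C \<Longrightarrow> J \<subseteq> K \<or> K \<subseteq> J"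
  shows "ideal (\<Union>C) R"
proof (rule idealI[OF ring_axioms])
  show "subgroup (\<Union>C) (add_monoid R)"
  proof (rule add.subgroupI)
    show "\<Union>C \<subseteq> carrier R"
      using C(2) ideal.Icarr by fastforce
    obtain J where "J \<in> C" using C by auto
    then have "\<zero> \<in> J" using C(2) additive_subgroup.zero_closed ideal.axioms(1) by blast
    then show "\<Union>C \<noteq> {}" using \<open>J \<in> C\<close> by blast
  next
    fix a assume "a \<in> \<Union>C"
    then obtain J where "J \<in> C" "a \<in> J" by auto
    then show "\<ominus> a \<in> \<Union>C"
      using C(2) by (metis UnionI additive_subgroup.a_inv_closed ideal.axioms(1))
  next
    fix a b assume "a \<in> \<Union>C" "b \<in> \<Union>C"
    then obtain J K where JK: "J \<in> C" "a \<in> J" "K \<in> C" "b \<in> K" by auto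
    then show "a \<oplus> b \<in> \<Union>C"
      using ch[OF JK(1,3)] C(2)
      by (metis (no_types, lifting) UnionI additive_subgroup.a_closed ideal.axioms(1) subsetD)
  qed
next
  fix a x assume "a \<in> \<Union>C" "x \<in> carrier R"
  then show "x \<otimes> a \<in> \<Union>C" using C(2) ideal.I_l_closed by fastforce
next
  fix a x assume "a \<in> \<Union>C" "x \<in> carrier R"
  then show "a \<otimes> x \<in> \<Union>C" using C(2) ideal.I_r_closed by fastforce
qed


lemma (in cring) sum_mem:
  assumes "m \<in> M" "x \<in> carrier R"
  shows "m \<oplus> x \<otimes> a \<in> M <+>\<^bsub>R\<^esub> PIdl a"
proof -
  have "x \<otimes> a \<in> PIdl a" unfolding cgenideal_def using assms(2) by blast
  then show ?thesis unfolding set_add_def' using assms(1) by (intro UN_I[of m] UN_I[of "x \<otimes> a"]) auto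
qed

lemma (in cring) sum_memD:
  assumes "z \<in> M <+>\<^bsub>R\<^esub> PIdl a"
  shows "\<exists>m\<in>M. \<exists>x\<in>carrier R. z = m \<oplus> x \<otimes> a"
  using assms unfolding set_add_def' cgenideal_def by auto

lemma (in cring) ext_meets:
  assumes M: "ideal M R" and a: "a \<in> carrier R" "a \<notin> M"
    and IM: "I \<subseteq> M"
    and mx: "\<And>J. ideal J R \<Longrightarrow> I \<subseteq> J \<Longrightarrow> J \<inter> S = {} \<Longrightarrow> M \<subseteq> J \<Longrightarrow> J = M"
  shows "\<exists>m\<in>M. \<exists>x\<in>carrier R. m \<oplus> x \<otimes> a \<in> S"
proof -
  let ?J = "M <+>\<^bsub>R\<^esub> PIdl a"
  have J: "ideal ?J R" using add_ideals[OF M cgenideal_ideal[OF a(1)]] .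
  have MJ: "M \<subseteq> ?J"
  proof
    fix m assume m: "m \<in> M"
    then have "m \<in> carrier R" using ideal.Icarr[OF M] by blast
    then have "m \<oplus> \<zero> \<otimes> a = m" using a by simp
    then show "m \<in> ?J" using sum_mem[OF m zero_closed, of a] by simp
  qed
  have "\<zero> \<oplus> \<one> \<otimes> a = a" using a by simp
  moreover have "\<zero> \<in> M" using M additive_subgroup.zero_closed ideal.axioms(1) by blast
  ultimately have "a \<in> ?J" using sum_mem[of "\<zero>" M "\<one>" a] by simp
  then have "?J \<noteq> M" using a by blast
  then have "?J \<inter> S \<noteq> {}" using mx[OF J] IM MJ by blast
  then obtain z where z: "z \<in> ?J" "z \<in> S" by blast
  obtain m x where "m \<in> M" "x \<in> carrier R" "z = m \<oplus> x \<otimes> a" using sum_memD[OF z(1)] by blast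
  then show ?thesis using z(2) by blast
qed

lemma (in cring) prime_avoiding:
  assumes I: "ideal I R" and S: "S \<subseteq> carrier R" "\<one> \<in> S" "\<And>x y. x \<in> S \<Longrightarrow> y \<in> S \<Longrightarrow> x \<otimes> y \<in> S"
    and dis: "I \<inter> S = {}"
  shows "\<exists>P. primeideal P R \<and> I \<subseteq> P \<and> P \<inter> S = {}"
proof -
  define A where "A = {J. ideal J R \<and> I \<subseteq> J \<and> J \<inter> S = {}}"
  have "\<exists>M\<in>A. \<forall>Y\<in>A. M \<subseteq> Y \<longrightarrow> Y = M"
  proof (rule subset_Zorn_nonempty)
    have "I \<in> A" using I dis unfolding A_def by simp
    then show "A \<noteq> {}" by auto
  next
    fix C assume C: "C \<noteq> {}" "subset.chain A C"
    have CA: "C \<subseteq> A" and ch: "\<And>J K. J \<in> C \<Longrightarrow> K \<in> C \<Longrightarrow> J \<subseteq> K \<or> K \<subseteq> J"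
      using C(2) unfolding pred_on.chain_def by auto
    have CI: "\<And>J. J \<in> C \<Longrightarrow> ideal J R" using CA unfolding A_def by auto
    have "ideal (\<Union>C) R" by (rule chain_union_ideal[OF C(1) CI ch])
    moreover obtain J0 where "J0 \<in> C" using C(1) by auto
    then have "I \<subseteq> \<Union>C" using CA unfolding A_def by auto
    moreover have "\<Union>C \<inter> S = {}" using CA unfolding A_def by auto
    ultimately show "\<Union>C \<in> A" unfolding A_def by simp
  qed
  then obtain M where MA: "M \<in> A" and mxA: "\<And>Y. Y \<in> A \<Longrightarrow> M \<subseteq> Y \<Longrightarrow> Y = M" by blast
  have M: "ideal M R" "I \<subseteq> M" "M \<inter> S = {}" using MA unfolding A_def by auto
  have mx: "\<And>J. ideal J R \<Longrightarrow> I \<subseteq> J \<Longrightarrow> J \<inter> S = {} \<Longrightarrow> M \<subseteq> J \<Longrightarrow> J = M"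
    using mxA unfolding A_def by simp
  have Mc: "M \<subseteq> carrier R" using ideal.Icarr[OF M(1)] by blast
  have "primeideal M R"
  proof (rule primeidealI[OF M(1) is_cring])
    show "carrier R \<noteq> M" using S(2) M(3) one_closed by blast
  next
    fix a b assume ab: "a \<in> carrier R" "b \<in> carrier R" "a \<otimes> b \<in> M"
    show "a \<in> M \<or> b \<in> M"
    proof (rule ccontr)
      assume "\<not> (a \<in> M \<or> b \<in> M)"
      then have n: "a \<notin> M" "b \<notin> M" by auto
      obtain m1 x where m1: "m1 \<in> M" "x \<in> carrier R" "m1 \<oplus> x \<otimes> a \<in> S"
        using ext_meets[OF M(1) ab(1) n(1) M(2) mx] by blast
      obtain m2 y where m2: "m2 \<in> M" "y \<in> carrier R" "m2 \<oplus> y \<otimes> b \<in> S"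
        using ext_meets[OF M(1) ab(2) n(2) M(2) mx] by blast
      have c: "m1 \<in> carrier R" "m2 \<in> carrier R" using m1 m2 Mc by auto
      have eq: "(m1 \<oplus> x \<otimes> a) \<otimes> (m2 \<oplus> y \<otimes> b) =
          m1 \<otimes> (m2 \<oplus> y \<otimes> b) \<oplus> (x \<otimes> a \<otimes> m2 \<oplus> (x \<otimes> y) \<otimes> (a \<otimes> b))"
        using c ab m1 m2 by algebra
      have "m1 \<otimes> (m2 \<oplus> y \<otimes> b) \<in> M"
        using ideal.I_r_closed[OF M(1) m1(1)] c m2 ab by simp
      moreover have "x \<otimes> a \<otimes> m2 \<in> M" using ideal.I_l_closed[OF M(1) m2(1)] ab m1 by simp
      moreover have "(x \<otimes> y) \<otimes> (a \<otimes> b) \<in> M" using ideal.I_l_closed[OF M(1) ab(3)] m1 m2 by simp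
      ultimately have "(m1 \<oplus> x \<otimes> a) \<otimes> (m2 \<oplus> y \<otimes> b) \<in> M"
        unfolding eq using additive_subgroup.a_closed[OF ideal.axioms(1)[OF M(1)]] by blast
      moreover have "(m1 \<oplus> x \<otimes> a) \<otimes> (m2 \<oplus> y \<otimes> b) \<in> S" using S(3) m1 m2 by blast
      ultimately show False using M(3) by blast
    qed
  qed
  then show ?thesis using M by blast
qed


lemma (in ring) ideal_add: "ideal I R \<Longrightarrow> x \<in> I \<Longrightarrow> y \<in> I \<Longrightarrow> x \<oplus> y \<in> I"
  by (meson additive_subgroup.a_closed ideal.axioms(1))

lemma (in ring) ideal_minus: "ideal I R \<Longrightarrow> x \<in> I \<Longrightarrow> y \<in> I \<Longrightarrow> x \<ominus> y \<in> I"
  unfolding a_minus_def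
  by (meson additive_subgroup.a_closed additive_subgroup.a_inv_closed ideal.axioms(1))

lemma (in ring) ideal_pow: "ideal I R \<Longrightarrow> a \<in> I \<Longrightarrow> (n::nat) \<ge> 1 \<Longrightarrow> a [^] n \<in> I"
proof -
  assume I: "ideal I R" and a: "a \<in> I" and n: "n \<ge> 1"
  then obtain k where k: "n = Suc k" by (cases n) auto
  have ac: "a \<in> carrier R" using ideal.Icarr[OF I a] .
  have "a [^] k \<otimes> a \<in> I" using ideal.I_l_closed[OF I a] ac by simp
  then show ?thesis using k by simp
qed

lemma (in cring) prime_pow:
  assumes P: "primeideal P R" and a: "a \<in> carrier R" and an: "a [^] (n::nat) \<in> P"
  shows "a \<in> P"
  using an
proof (induction n)
  case 0
  then have "\<one> \<in> P" by simp
  then have "P = carrier R" using ideal.one_imp_carrier[OF primeideal.axioms(1)[OF P]] by blast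
  then show ?case using primeideal.I_notcarr[OF P] by blast
next
  case (Suc n)
  then have "a [^] n \<otimes> a \<in> P" by simp
  then have "a [^] n \<in> P \<or> a \<in> P" using primeideal.I_prime[OF P] a by simp
  then show ?case using Suc.IH by blast
qed

lemma (in cring) pi_regular_prime_max:
  assumes pr: "pi_regular R" and P: "primeideal P R"
  shows "maximalideal P R"
proof -
  have PI: "ideal P R" using primeideal.axioms(1)[OF P] .
  show ?thesis
  proof (rule maximalidealI[OF PI primeideal.I_notcarr[OF P]])
    fix J assume J: "ideal J R" "P \<subseteq> J" "J \<subseteq> carrier R"
    show "J = P \<or> J = carrier R"
    proof (cases "J = P")
      case False
      then obtain a where aJ: "a \<in> J" and aP: "a \<notin> P" using J(2) by blast
      have a: "a \<in> carrier R" using J(3) aJ by blast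
      obtain n :: nat and r where n: "n \<ge> 1" and r: "r \<in> carrier R"
        and eq: "a [^] n = a [^] n \<otimes> r \<otimes> a [^] n"
        using pr a unfolding pi_regular_def by blast
      define t where "t = a [^] n"
      have t: "t \<in> carrier R" unfolding t_def using a by simp
      have "t \<otimes> (\<one> \<ominus> r \<otimes> t) = t \<ominus> t \<otimes> r \<otimes> t" using t r by algebra
      also have "\<dots> = \<zero>" using eq t unfolding t_def[symmetric] by simp
      finally have prod: "t \<otimes> (\<one> \<ominus> r \<otimes> t) \<in> P"
        using additive_subgroup.zero_closed[OF ideal.axioms(1)[OF PI]] by simp
      have c1: "\<one> \<ominus> r \<otimes> t \<in> carrier R" using r t by simp
      have tP: "t \<notin> P" using prime_pow[OF P a] aP unfolding t_def by blast
      have "t \<in> P \<or> \<one> \<ominus> r \<otimes> t \<in> P" using primeideal.I_prime[OF P t c1 prod] .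
      then have "\<one> \<ominus> r \<otimes> t \<in> P" using tP by simp
      then have 1: "\<one> \<ominus> r \<otimes> t \<in> J" using J(2) by blast
      have "t \<in> J" unfolding t_def using ideal_pow[OF J(1) aJ n] .
      then have 2: "r \<otimes> t \<in> J" using ideal.I_l_closed[OF J(1)] r by blast
      have "(\<one> \<ominus> r \<otimes> t) \<oplus> r \<otimes> t = \<one>" using t r by algebra
      then have "\<one> \<in> J" using ideal_add[OF J(1) 1 2] by simp
      then show ?thesis using ideal.one_imp_carrier[OF J(1)] by blast
    qed simp
  qed
qed


lemma (in cring) minus_zero_eq:
  assumes "x \<in> carrier R" "y \<in> carrier R" "x \<ominus> y = \<zero>"
  shows "x = y"
proof -
  have "x = (x \<ominus> y) \<oplus> y" using assms(1,2) by algebra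
  then show ?thesis using assms by simp
qed

lemma (in cring) pow_fix:
  assumes a: "a \<in> carrier R" and x: "x \<in> carrier R" and eq: "b = b \<otimes> (a \<otimes> x)" and b: "b \<in> carrier R"
  shows "b = b \<otimes> (a \<otimes> x) [^] (k::nat)"
proof (induction k)
  case 0
  then show ?case using b by simp
next
  case (Suc k)
  have "b \<otimes> (a \<otimes> x) [^] Suc k = (b \<otimes> (a \<otimes> x) [^] k) \<otimes> (a \<otimes> x)"
    using a x b by (simp add: m_assoc)
  also have "\<dots> = b \<otimes> (a \<otimes> x)" using Suc.IH by simp
  finally show ?case using eq by simp
qed

lemma (in cring) dim0_pi_regular:
  assumes dim0: "\<And>P. primeideal P R \<Longrightarrow> maximalideal P R"
  shows "pi_regular R"
  unfolding pi_regular_def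
proof
  fix a assume a: "a \<in> carrier R"
  define S where "S = {a [^] (n::nat) \<otimes> (\<one> \<ominus> a \<otimes> x) | n x. x \<in> carrier R}"
  show "\<exists>n::nat. n \<ge> 1 \<and> (\<exists>r \<in> carrier R. a [^] n = a [^] n \<otimes> r \<otimes> a [^] n)"
  proof (cases "\<zero> \<in> S")
    case True
    then obtain n :: nat and x where x: "x \<in> carrier R" and z0: "\<zero> = a [^] n \<otimes> (\<one> \<ominus> a \<otimes> x)"
      unfolding S_def by blast
    note z = z0[symmetric]
    define m where "m = Suc n"
    have eqn: "a [^] n \<otimes> (\<one> \<ominus> a \<otimes> x) = a [^] n \<ominus> (a [^] n \<otimes> a) \<otimes> x"
      using a x nat_pow_closed[OF a, of n] by algebra
    from z have z2: "a [^] n \<ominus> (a [^] n \<otimes> a) \<otimes> x = \<zero>" unfolding eqn .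
    have e1: "a [^] n = (a [^] n \<otimes> a) \<otimes> x"
      by (rule minus_zero_eq[OF nat_pow_closed[OF a] m_closed[OF m_closed[OF nat_pow_closed[OF a] a] x] z2])
    have "a [^] m = (a [^] n \<otimes> a) \<otimes> x \<otimes> a" unfolding m_def using e1 by simp
    also have "\<dots> = a [^] m \<otimes> (a \<otimes> x)" unfolding m_def using a x by (simp add: m_ac)
    finally have e2: "a [^] m = a [^] m \<otimes> (a \<otimes> x)" .
    have "a [^] m = a [^] m \<otimes> (a \<otimes> x) [^] m" using pow_fix[OF a x e2] a by simp
    also have "\<dots> = a [^] m \<otimes> x [^] m \<otimes> a [^] m" using a x by (simp add: nat_pow_distrib m_ac)
    finally have "a [^] m = a [^] m \<otimes> x [^] m \<otimes> a [^] m" .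
    moreover have "x [^] m \<in> carrier R" using x by simp
    ultimately show ?thesis unfolding m_def by (intro exI[of _ "Suc n"]) auto
  next
    case False
    have Sc: "S \<subseteq> carrier R" unfolding S_def using a by auto
    have "\<one> = a [^] (0::nat) \<otimes> (\<one> \<ominus> a \<otimes> \<zero>)" using a by (simp add: a_minus_def)
    then have S1: "\<one> \<in> S" unfolding S_def by blast
    have Sm: "x \<otimes> y \<in> S" if xS: "x \<in> S" and yS: "y \<in> S" for x y
    proof -
      obtain n :: nat and u where u: "u \<in> carrier R" "x = a [^] n \<otimes> (\<one> \<ominus> a \<otimes> u)"
        using xS unfolding S_def by blast
      obtain m :: nat and v where v: "v \<in> carrier R" "y = a [^] m \<otimes> (\<one> \<ominus> a \<otimes> v)"
        using yS unfolding S_def by blast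
      have pn: "a [^] n \<in> carrier R" and pm: "a [^] m \<in> carrier R" using a by simp_all
      have "x \<otimes> y = (a [^] n \<otimes> a [^] m) \<otimes> (\<one> \<ominus> a \<otimes> (u \<oplus> v \<ominus> a \<otimes> u \<otimes> v))"
        unfolding u(2) v(2) using pn pm a u(1) v(1) by algebra
      also have "\<dots> = a [^] (n + m) \<otimes> (\<one> \<ominus> a \<otimes> (u \<oplus> v \<ominus> a \<otimes> u \<otimes> v))"
        using nat_pow_mult[OF a] by simp
      finally show ?thesis unfolding S_def using a u(1) v(1) by blast
    qed
    have dis: "{\<zero>} \<inter> S = {}" using False by blast
    obtain P where P: "primeideal P R" "P \<inter> S = {}"
      using prime_avoiding[OF zeroideal Sc S1 Sm dis] by blast
    have M: "maximalideal P R" using dim0[OF P(1)] .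
    have PI: "ideal P R" using primeideal.axioms(1)[OF P(1)] .
    have "a = a [^] (1::nat) \<otimes> (\<one> \<ominus> a \<otimes> \<zero>)" using a by (simp add: a_minus_def)
    then have "a \<in> S" unfolding S_def by blast
    then have aP: "a \<notin> P" using P(2) by blast
    let ?J = "P <+>\<^bsub>R\<^esub> PIdl a"
    have J: "ideal ?J R" using add_ideals[OF PI cgenideal_ideal[OF a]] .
    have PJ: "P \<subseteq> ?J"
    proof
      fix p assume p: "p \<in> P"
      then have "p \<in> carrier R" using ideal.Icarr[OF PI] by blast
      then have "p \<oplus> \<zero> \<otimes> a = p" using a by simp
      then show "p \<in> ?J" using sum_mem[OF p zero_closed, of a] by simp
    qed
    have "\<zero> \<oplus> \<one> \<otimes> a = a" using a by simp
    moreover have "\<zero> \<in> P" using PI additive_subgroup.zero_closed ideal.axioms(1) by blast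
    ultimately have "a \<in> ?J" using sum_mem[of "\<zero>" P "\<one>" a] by simp
    then have "?J \<noteq> P" using aP by blast
    moreover have "?J \<subseteq> carrier R" using ideal.Icarr[OF J] by blast
    ultimately have "?J = carrier R" using maximalideal.I_maximal[OF M J PJ] by blast
    then have "\<one> \<in> ?J" by simp
    then obtain p x where p: "p \<in> P" "x \<in> carrier R" "\<one> = p \<oplus> x \<otimes> a"
      using sum_memD by blast
    have pc: "p \<in> carrier R" using ideal.Icarr[OF PI p(1)] .
    have "p = (p \<oplus> x \<otimes> a) \<ominus> a \<otimes> x" using pc p(2) a by algebra
    then have "p = \<one> \<ominus> a \<otimes> x" using p(3) by simp
    then have "p = a [^] (0::nat) \<otimes> (\<one> \<ominus> a \<otimes> x)" using a p(2) by simp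
    then have "p \<in> S" unfolding S_def using p(2) by blast
    then show ?thesis using P(2) p(1) by blast
  qed
qed


lemma (in cring) zero_jac: "\<zero> \<in> jacobson_radical R"
  unfolding jacobson_radical_def
  using additive_subgroup.zero_closed[OF ideal.axioms(1)[OF maximalideal.axioms(1)]] by blast

lemma (in cring) pi_regular_feckly:
  assumes pr: "pi_regular R" and a: "a \<in> carrier R"
  shows "feckly_clean_elem R a"
proof -
  obtain n :: nat and r where n: "n \<ge> 1" and r: "r \<in> carrier R"
    and eq: "a [^] n = a [^] n \<otimes> r \<otimes> a [^] n"
    using pr a unfolding pi_regular_def by blast
  define t where "t = a [^] n"
  have t: "t \<in> carrier R" unfolding t_def using a by simp
  have eqt: "t = t \<otimes> r \<otimes> t" using eq unfolding t_def .
  define f where "f = t \<otimes> r"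
  have f: "f \<in> carrier R" unfolding f_def using t r by simp
  define e where "e = \<one> \<ominus> f"
  have e: "e \<in> carrier R" unfolding e_def using f by simp
  define u where "u = a \<ominus> e"
  have u: "u \<in> carrier R" unfolding u_def using a e by simp
  have aeu: "a = e \<oplus> u" unfolding u_def using a e by algebra
  have ff: "f \<otimes> f = f"
  proof -
    have "f \<otimes> f = (t \<otimes> r \<otimes> t) \<otimes> r" unfolding f_def using t r by (simp add: m_ac)
    also have "\<dots> = f" using eqt unfolding f_def by simp
    finally show ?thesis .
  qed
  have ef: "e \<otimes> f = \<zero>"
  proof -
    have "e \<otimes> f = f \<ominus> f \<otimes> f" unfolding e_def using f by algebra
    then show ?thesis using ff f by (simp add: a_minus_def r_neg)
  qed
  have ft: "f \<otimes> t = t" unfolding f_def using eqt by simp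
  have ef1: "e \<oplus> f = \<one>" unfolding e_def using f by algebra
  have jac: "\<forall>s \<in> carrier R. e \<otimes> s \<otimes> (\<one> \<ominus> e) \<in> jacobson_radical R"
  proof
    fix s assume s: "s \<in> carrier R"
    have "\<one> \<ominus> e = f" unfolding e_def using f by algebra
    then have "e \<otimes> s \<otimes> (\<one> \<ominus> e) = s \<otimes> (e \<otimes> f)" using e s f by (simp add: m_ac)
    also have "\<dots> = \<zero>" using ef s by simp
    finally show "e \<otimes> s \<otimes> (\<one> \<ominus> e) \<in> jacobson_radical R" using zero_jac by simp
  qed
  have full: "genideal R {u} = carrier R"
  proof (rule ccontr)
    assume nf: "genideal R {u} \<noteq> carrier R"
    have uc: "{u} \<subseteq> carrier R" using u by simp
    have I: "ideal (genideal R {u}) R" using genideal_ideal[OF uc] .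
    have "\<one> \<notin> genideal R {u}" using ideal.one_imp_carrier[OF I] nf by blast
    then have dis: "genideal R {u} \<inter> {\<one>} = {}" by blast
    obtain P where P: "primeideal P R" "genideal R {u} \<subseteq> P"
      using prime_avoiding[OF I _ _ _ dis] by auto
    have PI: "ideal P R" using primeideal.axioms(1)[OF P(1)] .
    have uP: "u \<in> P" using genideal_self[OF uc] P(2) by blast
    have one: "\<one> \<notin> P" using ideal.one_imp_carrier[OF PI] primeideal.I_notcarr[OF P(1)] by metis
    have "e \<otimes> f \<in> P" using ef additive_subgroup.zero_closed[OF ideal.axioms(1)[OF PI]] by simp
    then have "e \<in> P \<or> f \<in> P" using primeideal.I_prime[OF P(1) e f] by blast
    then show False
    proof
      assume eP: "e \<in> P"
      have "a \<in> P" using aeu ideal_add[OF PI eP uP] by simp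
      then have "t \<in> P" unfolding t_def using ideal_pow[OF PI _ n] by blast
      then have "f \<in> P" unfolding f_def using ideal.I_r_closed[OF PI] r by blast
      then have "\<one> \<in> P" using ideal_add[OF PI eP] ef1 by metis
      then show False using one by blast
    next
      assume fP: "f \<in> P"
      have "f \<otimes> t \<in> P" using ideal.I_r_closed[OF PI fP t] .
      then have "t \<in> P" using ft by simp
      then have aP: "a \<in> P" using prime_pow[OF P(1) a] unfolding t_def by blast
      have "\<one> = (a \<ominus> u) \<oplus> f" unfolding u_def e_def using a f by algebra
      moreover have "(a \<ominus> u) \<oplus> f \<in> P" using ideal_add[OF PI ideal_minus[OF PI aP uP] fP] .
      ultimately show False using one by simp
    qed
  qed
  show ?thesis unfolding feckly_clean_elem_def full_elem_def
    using e u full aeu jac by blast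
qed

theorem corollary5p8:
  fixes R :: "('a, 'b) ring_scheme"
  assumes "cring R"
  shows "pi_regular R \<longleftrightarrow> feckly_clean R \<and> (\<forall>P. primeideal P R \<longrightarrow> maximalideal P R)"
proof -
  interpret cring R by fact
  show ?thesis
  proof
    assume pr: "pi_regular R"
    show "feckly_clean R \<and> (\<forall>P. primeideal P R \<longrightarrow> maximalideal P R)"
      unfolding feckly_clean_def using pi_regular_feckly[OF pr] pi_regular_prime_max[OF pr] by blast
  next
    assume "feckly_clean R \<and> (\<forall>P. primeideal P R \<longrightarrow> maximalideal P R)"
    then show "pi_regular R" using dim0_pi_regular by blast
  qed
qed

end
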